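(* Let $(B,\sqsubseteq)$ be an ordered functor such that $B$ has a cofree comonad, and let $f,g\colon X\to BX$ be $B$-coalgebras on a common carrier $X$. If $f(x)\sqsubseteq_{BX} g(x)$ for all $x\in X$, then $f^\infty(x)\lesssim_{B^\infty X} g^\infty(x)$ for all $x\in X$.
   Context: An ordered functor $(B,\sqsubseteq)$ is a functor $B\colon\mathsf{Set}\to\mathsf{Set}$ together with a preorder $\sqsubseteq_{BX}$ on $BX$ for every set $X$, such that $Bf\colon BX\to BY$ is monotone for every function $f\colon X\to Y$. For a relation $R\subseteq X\times Y$ with projections $\pi_1,\pi_2$, $\mathsf{Rel}(B)(R)=\{(b,c)\in BX\times BY\mid \exists d\in BR.\ B\pi_1(d)=b,\ B\pi_2(d)=c\}$ and $\mathsf{Rel}_{\sqsubseteq}(B)(R)=\{(b,c)\mid \exists b',c'.\ b\sqsubseteq_{BX}b',\ (b',c')\in\mathsf{Rel}(B)(R),\ c'\sqsubseteq_{BY}c\}$. Given coalgebras $f\colon X\to BX$, $g\colon Y\to BY$, a relation $R\subseteq X\times Y$ is a simulation if $(f(x),g(y))\in\mathsf{Rel}_{\sqsubseteq}(B)(R)$ for all $(x,y)\in R$; similarity is the greatest simulation. Cofree comonad: for each set $X$ there is a set $B^\infty X$ with maps $\theta_X\colon B^\infty X\to BB^\infty X$ and $\epsilon_X\colon B^\infty X\to X$ such that $\langle\theta_X,\epsilon_X\rangle$ is a final coalgebra for the functor $B(-)\times X$. For a coalgebra $f\colon X\to BX$, its coinductive extension $f^\infty\colon X\to B^\infty X$ is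 the unique $B(-)\times X$-coalgebra morphism from $\langle f,\mathrm{id}_X\rangle$ to $\langle\theta_X,\epsilon_X\rangle$. The functor $B(-)\times X$ is ordered by $(b,x)\,\widetilde{\sqsubseteq}\,(c,y)$ iff $b\sqsubseteq c$ (in $BW$) and $x=y$; $\lesssim_{B^\infty X}$ denotes the similarity of the coalgebra $\langle\theta_X,\epsilon_X\rangle$ with itself with respect to the ordered functor $(B(-)\times X,\widetilde{\sqsubseteq})$. *)

theory Defs
  imports "HOL-Library.FuncSet"
begin

text \<open>
  Sets are subsets of a universe type 'u
  (assumed infinite in the theorem).  A functor is given by an object part
  Fobj :: 'u set => 'v set and a morphism part Fmap X Y f (the image of the
  function f : X -> Y).  For B itself 'v = 'u; for B(-) x X we use 'v = 'u x 'u.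
\<close>

definition is_functor ::
  "('u set \<Rightarrow> 'v set) \<Rightarrow> ('u set \<Rightarrow> 'u set \<Rightarrow> ('u \<Rightarrow> 'u) \<Rightarrow> 'v \<Rightarrow> 'v) \<Rightarrow> bool" where
  "is_functor Fobj Fmap \<longleftrightarrow>
     (\<forall>X Y f. f \<in> X \<rightarrow> Y \<longrightarrow> Fmap X Y f \<in> Fobj X \<rightarrow> Fobj Y) \<and>
     (\<forall>X Y f g. f \<in> X \<rightarrow> Y \<and> (\<forall>x\<in>X. f x = g x) \<longrightarrow> (\<forall>b\<in>Fobj X. Fmap X Y f b = Fmap X Y g b)) \<and>
     (\<forall>X. \<forall>b\<in>Fobj X. Fmap X X id b = b) \<and>
     (\<forall>X Y Z f g. f \<in> X \<rightarrow> Y \<and> g \<in> Y \<rightarrow> Z \<longrightarrow>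
        (\<forall>b\<in>Fobj X. Fmap Y Z g (Fmap X Y f b) = Fmap X Z (g \<circ> f) b))"

definition is_ordered_functor ::
  "('u set \<Rightarrow> 'v set) \<Rightarrow> ('u set \<Rightarrow> 'u set \<Rightarrow> ('u \<Rightarrow> 'u) \<Rightarrow> 'v \<Rightarrow> 'v)
    \<Rightarrow> ('u set \<Rightarrow> 'v \<Rightarrow> 'v \<Rightarrow> bool) \<Rightarrow> bool" where
  "is_ordered_functor Fobj Fmap le \<longleftrightarrow>
     is_functor Fobj Fmap \<and>
     (\<forall>X b c. le X b c \<longrightarrow> b \<in> Fobj X \<and> c \<in> Fobj X) \<and>
     (\<forall>X. \<forall>b\<in>Fobj X. le X b b) \<and>
     (\<forall>X b c d. le X b c \<and> le X c d \<longrightarrow> le X b d) \<and>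
     (\<forall>X Y f. f \<in> X \<rightarrow> Y \<longrightarrow> (\<forall>b c. le X b c \<longrightarrow> le Y (Fmap X Y f b) (Fmap X Y f c)))"

text \<open>Rel(B)(R) for R \<subseteq> X \<times> Y: B is applied to (a copy Z in the universe of) the
  set R, with projections p1, p2.\<close>
definition RelF ::
  "('u set \<Rightarrow> 'v set) \<Rightarrow> ('u set \<Rightarrow> 'u set \<Rightarrow> ('u \<Rightarrow> 'u) \<Rightarrow> 'v \<Rightarrow> 'v)
    \<Rightarrow> 'u set \<Rightarrow> 'u set \<Rightarrow> ('u \<times> 'u) set \<Rightarrow> 'v \<Rightarrow> 'v \<Rightarrow> bool" where
  "RelF Fobj Fmap X Y R b c \<longleftrightarrow>
     (\<exists>Z p1 p2 d. p1 \<in> Z \<rightarrow> X \<and> p2 \<in> Z \<rightarrow> Y \<and> bij_betw (\<lambda>z. (p1 z, p2 z)) Z R \<and>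
        d \<in> Fobj Z \<and> Fmap Z X p1 d = b \<and> Fmap Z Y p2 d = c)"

definition RelF_le ::
  "('u set \<Rightarrow> 'v set) \<Rightarrow> ('u set \<Rightarrow> 'u set \<Rightarrow> ('u \<Rightarrow> 'u) \<Rightarrow> 'v \<Rightarrow> 'v)
    \<Rightarrow> ('u set \<Rightarrow> 'v \<Rightarrow> 'v \<Rightarrow> bool)
    \<Rightarrow> 'u set \<Rightarrow> 'u set \<Rightarrow> ('u \<times> 'u) set \<Rightarrow> 'v \<Rightarrow> 'v \<Rightarrow> bool" where
  "RelF_le Fobj Fmap le X Y R b c \<longleftrightarrow>
     b \<in> Fobj X \<and> c \<in> Fobj Y \<and>
     (\<exists>b' c'. le X b b' \<and> RelF Fobj Fmap X Y R b' c' \<and> le Y c' c)"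

definition simulation ::
  "('u set \<Rightarrow> 'v set) \<Rightarrow> ('u set \<Rightarrow> 'u set \<Rightarrow> ('u \<Rightarrow> 'u) \<Rightarrow> 'v \<Rightarrow> 'v)
    \<Rightarrow> ('u set \<Rightarrow> 'v \<Rightarrow> 'v \<Rightarrow> bool)
    \<Rightarrow> 'u set \<Rightarrow> ('u \<Rightarrow> 'v) \<Rightarrow> 'u set \<Rightarrow> ('u \<Rightarrow> 'v) \<Rightarrow> ('u \<times> 'u) set \<Rightarrow> bool" where
  "simulation Fobj Fmap le X f Y g R \<longleftrightarrow>
     R \<subseteq> X \<times> Y \<and> (\<forall>(x, y)\<in>R. RelF_le Fobj Fmap le X Y R (f x) (g y))"

definition similarity ::
  "('u set \<Rightarrow> 'v set) \<Rightarrow> ('u set \<Rightarrow> 'u set \<Rightarrow> ('u \<Rightarrow> 'u) \<Rightarrow> 'v \<Rightarrow> 'v)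
    \<Rightarrow> ('u set \<Rightarrow> 'v \<Rightarrow> 'v \<Rightarrow> bool)
    \<Rightarrow> 'u set \<Rightarrow> ('u \<Rightarrow> 'v) \<Rightarrow> 'u set \<Rightarrow> ('u \<Rightarrow> 'v) \<Rightarrow> ('u \<times> 'u) set" where
  "similarity Fobj Fmap le X f Y g = \<Union>{R. simulation Fobj Fmap le X f Y g R}"

definition coalg_morphism ::
  "('u set \<Rightarrow> 'v set) \<Rightarrow> ('u set \<Rightarrow> 'u set \<Rightarrow> ('u \<Rightarrow> 'u) \<Rightarrow> 'v \<Rightarrow> 'v)
    \<Rightarrow> 'u set \<Rightarrow> ('u \<Rightarrow> 'v) \<Rightarrow> 'u set \<Rightarrow> ('u \<Rightarrow> 'v) \<Rightarrow> ('u \<Rightarrow> 'u) \<Rightarrow> bool" where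
  "coalg_morphism Fobj Fmap W h C c u \<longleftrightarrow>
     u \<in> W \<rightarrow> C \<and> (\<forall>w\<in>W. c (u w) = Fmap W C u (h w))"

definition final_coalgebra ::
  "('u set \<Rightarrow> 'v set) \<Rightarrow> ('u set \<Rightarrow> 'u set \<Rightarrow> ('u \<Rightarrow> 'u) \<Rightarrow> 'v \<Rightarrow> 'v)
    \<Rightarrow> 'u set \<Rightarrow> ('u \<Rightarrow> 'v) \<Rightarrow> bool" where
  "final_coalgebra Fobj Fmap C c \<longleftrightarrow>
     c \<in> C \<rightarrow> Fobj C \<and>
     (\<forall>W h. h \<in> W \<rightarrow> Fobj W \<longrightarrow>
        (\<exists>u. coalg_morphism Fobj Fmap W h C c u) \<and>
        (\<forall>u u'. coalg_morphism Fobj Fmap W h C c u \<and> coalg_morphism Fobj Fmap W h C c u'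
                 \<longrightarrow> (\<forall>w\<in>W. u w = u' w)))"

definition prodobj :: "('u set \<Rightarrow> 'u set) \<Rightarrow> 'u set \<Rightarrow> 'u set \<Rightarrow> ('u \<times> 'u) set" where
  "prodobj Fobj X W = Fobj W \<times> X"

definition prodmap :: "('u set \<Rightarrow> 'u set \<Rightarrow> ('u \<Rightarrow> 'u) \<Rightarrow> 'u \<Rightarrow> 'u)
    \<Rightarrow> 'u set \<Rightarrow> 'u set \<Rightarrow> ('u \<Rightarrow> 'u) \<Rightarrow> 'u \<times> 'u \<Rightarrow> 'u \<times> 'u" where
  "prodmap Fmap W V u p = (Fmap W V u (fst p), snd p)"

definition prodle :: "('u set \<Rightarrow> 'u \<Rightarrow> 'u \<Rightarrow> bool) \<Rightarrow> 'u set \<Rightarrow> 'u \<times> 'u \<Rightarrow> 'u \<times> 'u \<Rightarrow> bool" where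
  "prodle le W p q \<longleftrightarrow> le W (fst p) (fst q) \<and> snd p = snd q"

text \<open>Cofree comonad at X: (Binf, \<langle>theta, eps\<rangle>) is a final B(-)\<times>X coalgebra.\<close>
definition cofree_at ::
  "('u set \<Rightarrow> 'u set) \<Rightarrow> ('u set \<Rightarrow> 'u set \<Rightarrow> ('u \<Rightarrow> 'u) \<Rightarrow> 'u \<Rightarrow> 'u)
    \<Rightarrow> 'u set \<Rightarrow> 'u set \<Rightarrow> ('u \<Rightarrow> 'u) \<Rightarrow> ('u \<Rightarrow> 'u) \<Rightarrow> bool" where
  "cofree_at Fobj Fmap X Binf theta eps \<longleftrightarrow>
     final_coalgebra (prodobj Fobj X) (prodmap Fmap) Binf (\<lambda>t. (theta t, eps t))"

definition coinductive_ext ::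
  "('u set \<Rightarrow> 'u set) \<Rightarrow> ('u set \<Rightarrow> 'u set \<Rightarrow> ('u \<Rightarrow> 'u) \<Rightarrow> 'u \<Rightarrow> 'u)
    \<Rightarrow> 'u set \<Rightarrow> 'u set \<Rightarrow> ('u \<Rightarrow> 'u) \<Rightarrow> ('u \<Rightarrow> 'u) \<Rightarrow> ('u \<Rightarrow> 'u) \<Rightarrow> ('u \<Rightarrow> 'u) \<Rightarrow> bool" where
  "coinductive_ext Fobj Fmap X Binf theta eps f u \<longleftrightarrow>
     coalg_morphism (prodobj Fobj X) (prodmap Fmap) X (\<lambda>x. (f x, x)) Binf (\<lambda>t. (theta t, eps t)) u"

end

theory Submission
  imports Defs
begin

theorem mainTheorem3:
  fixes Bobj :: "'u set \<Rightarrow> 'u set"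
    and Bmap :: "'u set \<Rightarrow> 'u set \<Rightarrow> ('u \<Rightarrow> 'u) \<Rightarrow> 'u \<Rightarrow> 'u"
    and le :: "'u set \<Rightarrow> 'u \<Rightarrow> 'u \<Rightarrow> bool"
    and X Binf :: "'u set"
    and theta eps f g finf ginf :: "'u \<Rightarrow> 'u"
  assumes "infinite (UNIV :: 'u set)"
    and "is_ordered_functor Bobj Bmap le"
    and "cofree_at Bobj Bmap X Binf theta eps"
    and "f \<in> X \<rightarrow> Bobj X" and "g \<in> X \<rightarrow> Bobj X"
    and "\<forall>x\<in>X. le X (f x) (g x)"
    and "coinductive_ext Bobj Bmap X Binf theta eps f finf"
    and "coinductive_ext Bobj Bmap X Binf theta eps g ginf"
  shows "\<forall>x\<in>X. (finf x, ginf x) \<in>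
           similarity (prodobj Bobj X) (prodmap Bmap) (prodle le)
             Binf (\<lambda>t. (theta t, eps t)) Binf (\<lambda>t. (theta t, eps t))"
proof -
  have F: "is_functor Bobj Bmap" using assms(2) unfolding is_ordered_functor_def by blast
  have refl: "\<And>W b. b \<in> Bobj W \<Longrightarrow> le W b b" using assms(2)[unfolded is_ordered_functor_def, THEN conjunct2, THEN conjunct2, THEN conjunct1] by blast
  have mono: "\<And>W V u b c. u \<in> W \<rightarrow> V \<Longrightarrow> le W b c \<Longrightarrow> le V (Bmap W V u b) (Bmap W V u c)"
    using assms(2)[unfolded is_ordered_functor_def, THEN conjunct2, THEN conjunct2, THEN conjunct2, THEN conjunct2] by blast
  have cong: "\<And>W V u v b. u \<in> W \<rightarrow> V \<Longrightarrow> (\<forall>x\<in>W. u x = v x) \<Longrightarrow> b \<in> Bobj W \<Longrightarrow> Bmap W V u b = Bmap W V v b"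
    using F[unfolded is_functor_def, THEN conjunct2, THEN conjunct1] by blast
  have comp: "\<And>W V U u v b. u \<in> W \<rightarrow> V \<Longrightarrow> v \<in> V \<rightarrow> U \<Longrightarrow> b \<in> Bobj W \<Longrightarrow> Bmap V U v (Bmap W V u b) = Bmap W U (v \<circ> u) b"
    using F[unfolded is_functor_def, THEN conjunct2, THEN conjunct2, THEN conjunct2] by blast
  have maps: "\<And>W V u. u \<in> W \<rightarrow> V \<Longrightarrow> Bmap W V u \<in> Bobj W \<rightarrow> Bobj V"
    using F[unfolded is_functor_def, THEN conjunct1] by blast
  have cin: "\<And>t. t \<in> Binf \<Longrightarrow> theta t \<in> Bobj Binf \<and> eps t \<in> X"
    using assms(3) unfolding cofree_at_def final_coalgebra_def prodobj_def by auto
  have finfB: "finf \<in> X \<rightarrow> Binf" and finfE: "\<And>w. w \<in> X \<Longrightarrow> theta (finf w) = Bmap X Binf finf (f w) \<and> eps (finf w) = w"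
    using assms(7) unfolding coinductive_ext_def coalg_morphism_def prodmap_def by auto
  have ginfB: "ginf \<in> X \<rightarrow> Binf" and ginfE: "\<And>w. w \<in> X \<Longrightarrow> theta (ginf w) = Bmap X Binf ginf (g w) \<and> eps (ginf w) = w"
    using assms(8) unfolding coinductive_ext_def coalg_morphism_def prodmap_def by auto
  define R where "R = (\<lambda>x. (finf x, ginf x)) ` X"
  define rep where "rep r = (SOME x. x \<in> X \<and> (finf x, ginf x) = r)" for r
  have rep: "\<And>r. r \<in> R \<Longrightarrow> rep r \<in> X \<and> (finf (rep r), ginf (rep r)) = r"
    unfolding R_def rep_def by (rule someI_ex) auto
  define Z where "Z = rep ` R"
  define q where "q x = rep (finf x, ginf x)" for x
  have qZ: "q \<in> X \<rightarrow> Z" unfolding q_def Z_def R_def by auto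
  have ZX: "Z \<subseteq> X" unfolding Z_def using rep by auto
  have qf: "\<And>x. x \<in> X \<Longrightarrow> finf (q x) = finf x \<and> ginf (q x) = ginf x"
    unfolding q_def using rep R_def by (metis (no_types, lifting) image_eqI prod.inject)
  have finfZ: "finf \<in> Z \<rightarrow> Binf" and ginfZ: "ginf \<in> Z \<rightarrow> Binf" using ZX finfB ginfB by auto
  have bij: "bij_betw (\<lambda>z. (finf z, ginf z)) Z R"
    unfolding bij_betw_def inj_on_def Z_def using rep by (auto simp: image_iff) (metis rep)
  have sim: "simulation (prodobj Bobj X) (prodmap Bmap) (prodle le)
             Binf (\<lambda>t. (theta t, eps t)) Binf (\<lambda>t. (theta t, eps t)) R"
    unfolding simulation_def
  proof
    show "R \<subseteq> Binf \<times> Binf" unfolding R_def using finfB ginfB by auto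
    show "\<forall>(a, b)\<in>R. RelF_le (prodobj Bobj X) (prodmap Bmap) (prodle le) Binf Binf R (theta a, eps a) (theta b, eps b)"
    proof (clarsimp simp: R_def)
      fix x assume x: "x \<in> X"
      have fx: "f x \<in> Bobj X" and gx: "g x \<in> Bobj X" using x assms(4,5) by auto
      define d where "d = (Bmap X Z q (f x), x)"
      have dZ: "d \<in> prodobj Bobj X Z" unfolding d_def prodobj_def using maps[OF qZ] fx x by auto
      have e1: "Bmap Z Binf finf (Bmap X Z q (f x)) = Bmap X Binf finf (f x)"
        using comp[OF qZ finfZ fx] cong[of "finf \<circ> q" X Binf finf "f x"] qZ finfZ qf fx by fastforce
      have e2: "Bmap Z Binf ginf (Bmap X Z q (f x)) = Bmap X Binf ginf (f x)"
        using comp[OF qZ ginfZ fx] cong[of "ginf \<circ> q" X Binf ginf "f x"] qZ ginfZ qf fx by fastforce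
      have rel: "RelF (prodobj Bobj X) (prodmap Bmap) Binf Binf ((\<lambda>x. (finf x, ginf x)) ` X)
                 (theta (finf x), x) (Bmap X Binf ginf (f x), x)"
        unfolding RelF_def
        apply (rule exI[of _ Z], rule exI[of _ finf], rule exI[of _ ginf], rule exI[of _ d])
        using finfZ ginfZ bij dZ e1 e2 finfE[OF x] unfolding R_def d_def prodmap_def by auto
      have inB1: "theta (finf x) \<in> Bobj Binf" using cin finfB x by auto
      have inB2: "theta (ginf x) \<in> Bobj Binf" using cin ginfB x by auto
      have l2: "le Binf (Bmap X Binf ginf (f x)) (theta (ginf x))"
        using mono[OF ginfB] assms(6) x ginfE[OF x] by auto
      show "RelF_le (prodobj Bobj X) (prodmap Bmap) (prodle le) Binf Binf ((\<lambda>x. (finf x, ginf x)) ` X)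
          (theta (finf x), eps (finf x)) (theta (ginf x), eps (ginf x))"
        unfolding RelF_le_def
        apply (intro conjI)
        using inB1 finfE[OF x] x apply (simp add: prodobj_def)
        using inB2 ginfE[OF x] x apply (simp add: prodobj_def)
        apply (rule exI[of _ "(theta (finf x), x)"], rule exI[of _ "(Bmap X Binf ginf (f x), x)"])
        using rel refl[OF inB1] l2 finfE[OF x] ginfE[OF x] unfolding prodle_def by auto
    qed
  qed
  show ?thesis unfolding similarity_def using sim R_def by blast
qed

end
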